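(* Assume $\rho>(A-\delta)(1-\gamma)$. The function $v(x)=\nu\,G(x)^{1-\gamma}$, with $$\nu=\frac{1}{1-\gamma}\Big(\frac{\rho-(A-\delta)(1-\gamma)}{\gamma}\Big)^{-\gamma},$$ is (Fréchet) differentiable at every $x\in\mathcal X$, and for every $x\in\mathcal X\cap D(\mathcal A)$ it satisfies the HJB equation $$\rho\,v(x)-\mathcal H(x,Dv(x))=0 .$$
   Context: Parameters $A,\delta,\rho,\varepsilon,\eta,\tau>0$, $\gamma>0$, $\gamma\neq1$. $M^2=\mathbb{R}\times L^2([-\tau,0];\mathbb{R})$ with inner product $\langle x,y\rangle=x_0y_0+\int_{-\tau}^0x_1y_1$. $\mathcal A$ has domain $D(\mathcal A)=\{(x_0,x_1): x_1\in W^{1,2}([-\tau,0]),\ x_1(-\tau)=0\}$, $\mathcal A(x_0,x_1)=((A-\delta)x_0,-x_1')$. For $p\in M^2$, $\mathcal B^*p=-p_0+\varepsilon\int_{-\tau}^0e^{\eta s}p_1(s)ds$. For $x\in D(\mathcal A)$, $p\in M^2$, $c\ge x_1(0)$: $H_{CV}(x,p;c)=\frac{(c-x_1(0))^{1-\gamma}}{1-\gamma}+\langle\mathcal Ax,p\rangle+c\,\mathcal B^*p$ and $\mathcal H(x,p)=\sup_{c\ge x_1(0)}H_{CV}(x,p;c)$. Define $\kappa=\big(1-\varepsilon\int_{-\tau}^0e^{(A-\delta+\eta)s}ds,\ s\mapsto -e^{(A-\delta)s}\big)\in M^2$, $G(x)=\langle x,\kappa\rangle=\big(1-\varepsilon\int_{-\tau}^0e^{(A-\delta+\eta)s}ds\big)x_0-\int_{-\tau}^0e^{(A-\delta)s}x_1(s)ds$,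 and $\mathcal X=\{x\in M^2: G(x)>0\}$. *)

theory Defs
  imports "HOL-Analysis.Analysis"
begin

text \<open>Elements of M^2 = R x L^2([-tau,0]) are represented as pairs (x0, x1) with
  x1 :: real => real square integrable on [-tau,0] (values outside [-tau,0] are irrelevant).\<close>

type_synonym m2 = "real \<times> (real \<Rightarrow> real)"

definition L2 :: "real \<Rightarrow> (real \<Rightarrow> real) \<Rightarrow> bool" where
  "L2 \<tau> f \<longleftrightarrow> (\<lambda>s. indicator {-\<tau>..0} s * f s) \<in> borel_measurable lborel
     \<and> set_integrable lborel {-\<tau>..0} (\<lambda>s. (f s)\<^sup>2)"

definition M2 :: "real \<Rightarrow> m2 \<Rightarrow> bool" where
  "M2 \<tau> x \<longleftrightarrow> L2 \<tau> (snd x)"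

definition ip :: "real \<Rightarrow> m2 \<Rightarrow> m2 \<Rightarrow> real" where
  "ip \<tau> x y = fst x * fst y + (LINT s:{-\<tau>..0}|lborel. snd x s * snd y s)"

definition nrm :: "real \<Rightarrow> m2 \<Rightarrow> real" where
  "nrm \<tau> x = sqrt (ip \<tau> x x)"

definition madd :: "m2 \<Rightarrow> m2 \<Rightarrow> m2" where
  "madd x h = (fst x + fst h, \<lambda>s. snd x s + snd h s)"

text \<open>Frechet differentiability of f at x with gradient p in M^2 (Riesz representation
  of the Frechet derivative Df(x)).\<close>
definition frechet_grad :: "real \<Rightarrow> (m2 \<Rightarrow> real) \<Rightarrow> m2 \<Rightarrow> m2 \<Rightarrow> bool" where
  "frechet_grad \<tau> f x p \<longleftrightarrow> M2 \<tau> p \<and>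
     (\<forall>e>0. \<exists>d>0. \<forall>h. M2 \<tau> h \<and> 0 < nrm \<tau> h \<and> nrm \<tau> h < d \<longrightarrow>
        \<bar>f (madd x h) - f x - ip \<tau> p h\<bar> \<le> e * nrm \<tau> h)"

definition kappa0 :: "real \<Rightarrow> real \<Rightarrow> real \<Rightarrow> real \<Rightarrow> real \<Rightarrow> real" where
  "kappa0 A \<delta> \<epsilon> \<eta> \<tau> = 1 - \<epsilon> * (LINT s:{-\<tau>..0}|lborel. exp ((A - \<delta> + \<eta>) * s))"

definition Gf :: "real \<Rightarrow> real \<Rightarrow> real \<Rightarrow> real \<Rightarrow> real \<Rightarrow> m2 \<Rightarrow> real" where
  "Gf A \<delta> \<epsilon> \<eta> \<tau> x = kappa0 A \<delta> \<epsilon> \<eta> \<tau> * fst x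
      - (LINT s:{-\<tau>..0}|lborel. exp ((A - \<delta>) * s) * snd x s)"

definition nu :: "real \<Rightarrow> real \<Rightarrow> real \<Rightarrow> real \<Rightarrow> real" where
  "nu A \<delta> \<rho> \<gamma> = (1 / (1 - \<gamma>)) * ((\<rho> - (A - \<delta>) * (1 - \<gamma>)) / \<gamma>) powr (- \<gamma>)"

definition vf :: "real \<Rightarrow> real \<Rightarrow> real \<Rightarrow> real \<Rightarrow> real \<Rightarrow> real \<Rightarrow> real \<Rightarrow> m2 \<Rightarrow> real" where
  "vf A \<delta> \<rho> \<epsilon> \<eta> \<tau> \<gamma> x = nu A \<delta> \<rho> \<gamma> * (Gf A \<delta> \<epsilon> \<eta> \<tau> x) powr (1 - \<gamma>)"

definition Bstar :: "real \<Rightarrow> real \<Rightarrow> real \<Rightarrow> m2 \<Rightarrow> real" where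
  "Bstar \<epsilon> \<eta> \<tau> p = - fst p + \<epsilon> * (LINT s:{-\<tau>..0}|lborel. exp (\<eta> * s) * snd p s)"

text \<open>For x in D(A), x1 is represented by its continuous representative
  x1(s) = integral from -tau to s of g, with g = x1' in L^2; then
  <A x, p> = (A - delta) x0 p0 - integral of g * p1.\<close>
definition Axp :: "real \<Rightarrow> real \<Rightarrow> real \<Rightarrow> m2 \<Rightarrow> (real \<Rightarrow> real) \<Rightarrow> m2 \<Rightarrow> real" where
  "Axp A \<delta> \<tau> x g p = (A - \<delta>) * fst x * fst p + (LINT s:{-\<tau>..0}|lborel. (- g s) * snd p s)"

definition HCV :: "real \<Rightarrow> real \<Rightarrow> real \<Rightarrow> real \<Rightarrow> real \<Rightarrow> real \<Rightarrow> m2 \<Rightarrow> (real \<Rightarrow> real) \<Rightarrow> m2 \<Rightarrow> real \<Rightarrow> real" where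
  "HCV A \<delta> \<epsilon> \<eta> \<tau> \<gamma> x g p c =
     (c - snd x 0) powr (1 - \<gamma>) / (1 - \<gamma>) + Axp A \<delta> \<tau> x g p + c * Bstar \<epsilon> \<eta> \<tau> p"

text \<open>Hamiltonian; the supremum is taken over c > x1(0) (for gamma > 1 the value
  at c = x1(0) is -infinity, for gamma < 1 the endpoint does not change the sup).\<close>
definition Ham :: "real \<Rightarrow> real \<Rightarrow> real \<Rightarrow> real \<Rightarrow> real \<Rightarrow> real \<Rightarrow> m2 \<Rightarrow> (real \<Rightarrow> real) \<Rightarrow> m2 \<Rightarrow> real" where
  "Ham A \<delta> \<epsilon> \<eta> \<tau> \<gamma> x g p = (SUP c\<in>{snd x 0<..}. HCV A \<delta> \<epsilon> \<eta> \<tau> \<gamma> x g p c)"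

end

theory Submission
  imports Defs
begin

lemma fubini_id:
  fixes g :: "real \<Rightarrow> real" and a \<tau> :: real
  assumes tau: "\<tau> > 0" and gi: "set_integrable lborel {-\<tau>..0} g" and a: "a \<noteq> 0"
  shows "a * (LINT s:{-\<tau>..0}|lborel. exp (a * s) * (LINT u:{-\<tau>..s}|lborel. g u))
       = (LINT u:{-\<tau>..0}|lborel. g u) - (LINT s:{-\<tau>..0}|lborel. exp (a * s) * g s)"
proof -
  define S where "S = {-\<tau>..(0::real)}"
  define G where "G u = indicator S u * g u" for u
  have Gi: "integrable lborel G" using gi unfolding G_def S_def set_integrable_def by simp
  have Gm[measurable]: "G \<in> borel_measurable lborel" using Gi by auto
  define H where "H u s = indicator S s * (if u \<le> s then exp (a * s) else 0)" for u s :: real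
  have Hm[measurable]: "(\<lambda>x. H (fst x) (snd x)) \<in> borel_measurable (lborel \<Otimes>\<^sub>M lborel)"
    unfolding H_def S_def by measurable
  have Hm1[measurable]: "H u \<in> borel_measurable lborel" for u
    unfolding H_def S_def by measurable
  define B where "B = exp (\<bar>a\<bar> * \<tau>)"
  have eB: "exp (a * s) \<le> B" if "s \<in> S" for s
  proof -
    have "\<bar>s\<bar> \<le> \<tau>" using that unfolding S_def by auto
    then have "\<bar>a\<bar> * \<bar>s\<bar> \<le> \<bar>a\<bar> * \<tau>" by (simp add: mult_left_mono)
    moreover have "a * s \<le> \<bar>a\<bar> * \<bar>s\<bar>" by (metis abs_ge_self abs_mult)
    ultimately show ?thesis unfolding B_def by simp
  qed
  have Hb: "\<bar>H u s\<bar> \<le> indicator S s * B" for u s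
    using eB unfolding H_def B_def by (auto simp: indicator_def)
  have IB: "integrable lborel (\<lambda>s. indicator S s * B)"
    using borel_integrable_compact[of S "\<lambda>_. B"] unfolding S_def by auto
  define K where "K = (\<integral>s. indicator S s * B \<partial>lborel)"
  have Hi: "integrable lborel (H u)" for u
    by (rule Bochner_Integration.integrable_bound[OF IB], simp, intro AE_I2, simp only: real_norm_def, rule order_trans[OF Hb], simp)
  have Hai: "integrable lborel (\<lambda>s. \<bar>H u s\<bar>)" for u using Hi by auto
  have HK: "(\<integral>s. \<bar>H u s\<bar> \<partial>lborel) \<le> K" for u
    unfolding K_def by (rule integral_mono[OF Hai IB]) (use Hb in auto)
  define f where "f u s = G u * H u s" for u s

  have fi: "integrable (lborel \<Otimes>\<^sub>M lborel) (case_prod f)"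
  proof (rule lborel_pair.Fubini_integrable)
    show "case_prod f \<in> borel_measurable (lborel \<Otimes>\<^sub>M lborel)"
      unfolding f_def case_prod_beta by measurable
    have eq: "(\<integral>s. norm (case_prod f (u, s)) \<partial>lborel) = \<bar>G u\<bar> * (\<integral>s. \<bar>H u s\<bar> \<partial>lborel)" for u
      unfolding f_def by (simp add: abs_mult)
    show "integrable lborel (\<lambda>u. \<integral>s. norm (case_prod f (u, s)) \<partial>lborel)"
      unfolding eq
    proof (rule Bochner_Integration.integrable_bound)
      show "integrable lborel (\<lambda>u. \<bar>G u\<bar> * K)" using Gi by auto
      show "(\<lambda>u. \<bar>G u\<bar> * (\<integral>s. \<bar>H u s\<bar> \<partial>lborel)) \<in> borel_measurable lborel"
        using Hm by measurable
      show "AE u in lborel. norm (\<bar>G u\<bar> * (\<integral>s. \<bar>H u s\<bar> \<partial>lborel)) \<le> norm (\<bar>G u\<bar> * K)"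
        using HK by (auto simp: abs_mult intro!: AE_I2 mult_left_mono integral_nonneg order_trans[OF HK])
    qed
    show "AE u in lborel. integrable lborel (\<lambda>s. case_prod f (u, s))"
      unfolding f_def using Hi by auto
  qed
  have F: "(\<integral>s. (\<integral>u. f u s \<partial>lborel) \<partial>lborel) = (\<integral>u. (\<integral>s. f u s \<partial>lborel) \<partial>lborel)"
    by (rule lborel_pair.Fubini_integral[OF fi])
  have L: "(LINT s:{-\<tau>..0}|lborel. exp (a * s) * (LINT u:{-\<tau>..s}|lborel. g u))
      = (\<integral>s. (\<integral>u. f u s \<partial>lborel) \<partial>lborel)"
    unfolding set_lebesgue_integral_def
  proof (rule Bochner_Integration.integral_cong[OF refl])
    fix s :: real
    show "indicator {-\<tau>..0} s *\<^sub>R (exp (a * s) * (\<integral>u. indicator {-\<tau>..s} u *\<^sub>R g u \<partial>lborel))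
        = (\<integral>u. f u s \<partial>lborel)"
    proof (cases "s \<in> S")
      case True
      have "(\<lambda>u. f u s) = (\<lambda>u. exp (a * s) * (indicator {-\<tau>..s} u *\<^sub>R g u))"
        using True unfolding f_def G_def H_def S_def by (auto simp: indicator_def)
      then show ?thesis using True unfolding S_def by simp
    next
      case False
      then show ?thesis unfolding f_def H_def S_def by simp
    qed
  qed
  have Hint: "(\<integral>s. H u s \<partial>lborel) = (1 - exp (a * u)) / a" if "u \<in> S" for u
  proof -
    have "(\<integral>s. H u s \<partial>lborel) = (\<integral>s. indicator {u..0} s *\<^sub>R exp (a * s) \<partial>lborel)"
      using that unfolding H_def S_def by (intro Bochner_Integration.integral_cong) (auto simp: indicator_def)
    also have "\<dots> = exp (a * 0) / a - exp (a * u) / a"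
    proof (rule integral_FTC_atLeastAtMost)
      show "u \<le> 0" using that unfolding S_def by auto
      show "continuous_on {u..0} (\<lambda>s. exp (a * s))" by (intro continuous_intros)
      fix x :: real
      show "((\<lambda>s. exp (a * s) / a) has_vector_derivative exp (a * x)) (at x within {u..0})"
        unfolding has_real_derivative_iff_has_vector_derivative[symmetric]
        using a by (auto intro!: derivative_eq_intros)
    qed
    finally show ?thesis by (simp add: diff_divide_distrib)
  qed
  have R: "(\<lambda>u. \<integral>s. f u s \<partial>lborel) = (\<lambda>u. (G u - G u * exp (a * u)) / a)"
  proof
    fix u
    show "(\<integral>s. f u s \<partial>lborel) = (G u - G u * exp (a * u)) / a"
    proof (cases "u \<in> S")
      case True then show ?thesis unfolding f_def using Hint[OF True] by (simp add: field_simps)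
    next
      case False then show ?thesis unfolding f_def G_def by simp
    qed
  qed
  have GEi: "integrable lborel (\<lambda>u. G u * exp (a * u))"
  proof (rule Bochner_Integration.integrable_bound)
    show "integrable lborel (\<lambda>u. B * G u)" using Gi by auto
    show "(\<lambda>u. G u * exp (a * u)) \<in> borel_measurable lborel" by measurable
    show "AE u in lborel. norm (G u * exp (a * u)) \<le> norm (B * G u)"
    proof (intro AE_I2)
      fix u
      show "norm (G u * exp (a * u)) \<le> norm (B * G u)"
      proof (cases "u \<in> S")
        case True
        then show ?thesis using eB[OF True] by (auto simp: abs_mult B_def mult.commute intro!: mult_left_mono)
      next
        case False then show ?thesis unfolding G_def by simp
      qed
    qed
  qed
  have R2: "(\<integral>u. (G u - G u * exp (a * u)) / a \<partial>lborel) = ((\<integral>u. G u \<partial>lborel) - (\<integral>u. G u * exp (a * u) \<partial>lborel)) / a"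
    using Gi GEi by simp
  have e1: "(LINT u:{-\<tau>..0}|lborel. g u) = (\<integral>u. G u \<partial>lborel)"
    unfolding set_lebesgue_integral_def G_def S_def by simp
  have e2: "(LINT s:{-\<tau>..0}|lborel. exp (a * s) * g s) = (\<integral>u. G u * exp (a * u) \<partial>lborel)"
    unfolding set_lebesgue_integral_def G_def S_def by (simp add: mult.commute mult.left_commute)
  show ?thesis unfolding L F R R2 e1 e2 using a by simp
qed

lemma L2_cont: "continuous_on {-\<tau>..0} c \<Longrightarrow> L2 \<tau> c"
  unfolding L2_def set_integrable_def
proof
  assume c: "continuous_on {-\<tau>..0} c"
  have "integrable lborel (\<lambda>x. indicator {-\<tau>..0} x *\<^sub>R c x)"
    by (rule borel_integrable_compact) (auto intro: c)
  then show "(\<lambda>s. indicator {-\<tau>..0} s * c s) \<in> borel_measurable lborel" by auto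
  show "integrable lborel (\<lambda>x. indicator {-\<tau>..0} x *\<^sub>R (c x)\<^sup>2)"
    by (rule borel_integrable_compact) (auto intro!: continuous_intros c)
qed

lemma L2_prod:
  assumes "L2 \<tau> f" "L2 \<tau> h"
  shows "set_integrable lborel {-\<tau>..0} (\<lambda>s. f s * h s)"
proof (rule set_integrable_bound)
  show "set_integrable lborel {-\<tau>..0} (\<lambda>s. (f s)\<^sup>2 + (h s)\<^sup>2)"
    using assms unfolding L2_def by auto
  have m1: "(\<lambda>s. indicator {-\<tau>..0} s * f s) \<in> borel_measurable lborel"
   and m2: "(\<lambda>s. indicator {-\<tau>..0} s * h s) \<in> borel_measurable lborel"
    using assms unfolding L2_def by auto
  have "(\<lambda>x. indicator {-\<tau>..0} x *\<^sub>R (f x * h x)) = 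
     (\<lambda>s. (indicator {-\<tau>..0} s * f s) * (indicator {-\<tau>..0} s * h s))"
    by (auto simp: indicator_def)
  then show "set_borel_measurable lborel {-\<tau>..0} (\<lambda>s. f s * h s)"
    unfolding set_borel_measurable_def using m1 m2 by simp
  show "AE x in lborel. x \<in> {-\<tau>..0} \<longrightarrow> norm (f x * h x) \<le> norm ((f x)\<^sup>2 + (h x)\<^sup>2)"
  proof (intro AE_I2 impI)
    fix x
    have "0 \<le> (\<bar>f x\<bar> - \<bar>h x\<bar>)\<^sup>2" by simp
    then have "2*(\<bar>f x\<bar>*\<bar>h x\<bar>) \<le> f x*f x + h x*h x"
      by (simp add: power2_eq_square algebra_simps abs_mult_self_eq)
    moreover have "0 \<le> \<bar>f x\<bar>*\<bar>h x\<bar>" by simp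
    moreover have "norm (f x * h x) = \<bar>f x\<bar>*\<bar>h x\<bar>" by (simp add: abs_mult)
    moreover have "norm ((f x)\<^sup>2 + (h x)\<^sup>2) = f x*f x + h x*h x" by (simp add: power2_eq_square)
    ultimately show "norm (f x * h x) \<le> norm ((f x)\<^sup>2 + (h x)\<^sup>2)"
      by linarith
  qed
qed

lemma L2_int: "L2 \<tau> f \<Longrightarrow> set_integrable lborel {-\<tau>..0} f"
  using L2_prod[of \<tau> f "\<lambda>_. 1"] L2_cont[of \<tau> "\<lambda>_. 1"] by simp

lemma L2_scale: "L2 \<tau> f \<Longrightarrow> L2 \<tau> (\<lambda>s. t * f s)"
  unfolding L2_def
proof (elim conjE, intro conjI)
  assume "(\<lambda>s. indicator {-\<tau>..0} s * f s) \<in> borel_measurable lborel"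
  then have "(\<lambda>s. t * (indicator {-\<tau>..0} s * f s)) \<in> borel_measurable lborel" by simp
  then show "(\<lambda>s. indicator {-\<tau>..0} s * (t * f s)) \<in> borel_measurable lborel"
    by (simp add: mult.left_commute)
  assume "set_integrable lborel {-\<tau>..0} (\<lambda>s. (f s)\<^sup>2)"
  then have "set_integrable lborel {-\<tau>..0} (\<lambda>s. t\<^sup>2 * (f s)\<^sup>2)" by simp
  then show "set_integrable lborel {-\<tau>..0} (\<lambda>s. (t * f s)\<^sup>2)"
    by (simp add: power_mult_distrib)
qed

lemma sq_nonneg_int: fixes f :: "real \<Rightarrow> real" shows "0 \<le> (LINT s:{-\<tau>..0}|lborel. f s * f s)"
  unfolding set_lebesgue_integral_def by (intro integral_nonneg_AE AE_I2) (auto simp: indicator_def)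

lemma nrm_scale: "nrm \<tau> (t * fst h, \<lambda>s. t * snd h s) = \<bar>t\<bar> * nrm \<tau> h"
proof -
  have "ip \<tau> (t * fst h, \<lambda>s. t * snd h s) (t * fst h, \<lambda>s. t * snd h s) = t\<^sup>2 * ip \<tau> h h"
    unfolding ip_def by (simp add: power2_eq_square algebra_simps)
  then show ?thesis unfolding nrm_def by (simp add: real_sqrt_mult)
qed

lemma Gf_scale: "Gf A \<delta> \<epsilon> \<eta> \<tau> (t * fst h, \<lambda>s. t * snd h s) = t * Gf A \<delta> \<epsilon> \<eta> \<tau> h"
  unfolding Gf_def by (simp add: algebra_simps)

lemma Gf_add:
  assumes "L2 \<tau> (snd x)" "L2 \<tau> (snd h)"
  shows "Gf A \<delta> \<epsilon> \<eta> \<tau> (madd x h) = Gf A \<delta> \<epsilon> \<eta> \<tau> x + Gf A \<delta> \<epsilon> \<eta> \<tau> h"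
proof -
  have c: "L2 \<tau> (\<lambda>s. exp ((A - \<delta>) * s))" by (rule L2_cont) (intro continuous_intros)
  have i1: "set_integrable lborel {-\<tau>..0} (\<lambda>s. exp ((A - \<delta>) * s) * snd x s)"
    by (rule L2_prod[OF c assms(1)])
  have i2: "set_integrable lborel {-\<tau>..0} (\<lambda>s. exp ((A - \<delta>) * s) * snd h s)"
    by (rule L2_prod[OF c assms(2)])
  have "(LINT s:{-\<tau>..0}|lborel. exp ((A - \<delta>) * s) * (snd x s + snd h s))
     = (LINT s:{-\<tau>..0}|lborel. exp ((A - \<delta>) * s) * snd x s + exp ((A - \<delta>) * s) * snd h s)"
    by (simp add: algebra_simps)
  also have "\<dots> = (LINT s:{-\<tau>..0}|lborel. exp ((A - \<delta>) * s) * snd x s) + (LINT s:{-\<tau>..0}|lborel. exp ((A - \<delta>) * s) * snd h s)"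
    by (rule set_integral_add(2)[OF i1 i2])
  finally show ?thesis unfolding Gf_def madd_def by (simp add: algebra_simps)
qed

lemma Gf_bound:
  assumes h: "L2 \<tau> (snd h)" and N: "0 < nrm \<tau> h"
  shows "\<bar>Gf A \<delta> \<epsilon> \<eta> \<tau> h\<bar> \<le> (\<bar>kappa0 A \<delta> \<epsilon> \<eta> \<tau>\<bar>
           + ((LINT s:{-\<tau>..0}|lborel. exp ((A - \<delta>) * s) * exp ((A - \<delta>) * s)) + 1) / 2) * nrm \<tau> h"
proof -
  define e where "e s = exp ((A - \<delta>) * s)" for s
  define E where "E = (LINT s:{-\<tau>..0}|lborel. e s * e s)"
  define H where "H = (LINT s:{-\<tau>..0}|lborel. snd h s * snd h s)"
  define I where "I = (LINT s:{-\<tau>..0}|lborel. e s * snd h s)"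
  define n where "n = nrm \<tau> h"
  have c: "L2 \<tau> e" unfolding e_def by (rule L2_cont) (intro continuous_intros)
  have H0: "0 \<le> H" unfolding H_def by (rule sq_nonneg_int)
  have n2: "n\<^sup>2 = (fst h)\<^sup>2 + H"
    unfolding n_def nrm_def ip_def H_def using H0[unfolded H_def]
    by (simp add: power2_eq_square)
  have n0: "0 < n" using N n_def by simp
  have h0: "\<bar>fst h\<bar> \<le> n" using n2 H0 n0
    by (metis abs_le_square_iff abs_of_pos le_add_same_cancel1)
  have Hn: "H \<le> n\<^sup>2" using n2 by simp
  have iee: "set_integrable lborel {-\<tau>..0} (\<lambda>s. e s * e s)" by (rule L2_prod[OF c c])
  have ihh: "set_integrable lborel {-\<tau>..0} (\<lambda>s. snd h s * snd h s)" by (rule L2_prod[OF h h])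
  have ieh: "set_integrable lborel {-\<tau>..0} (\<lambda>s. e s * snd h s)" by (rule L2_prod[OF c h])
  have ib: "set_integrable lborel {-\<tau>..0} (\<lambda>s. n / 2 * (e s * e s) + 1 / (2 * n) * (snd h s * snd h s))"
    using iee ihh by auto
  have vb: "(LINT s:{-\<tau>..0}|lborel. n / 2 * (e s * e s) + 1 / (2 * n) * (snd h s * snd h s))
      = n / 2 * E + 1 / (2 * n) * H"
    unfolding E_def H_def using iee ihh by (subst set_integral_add(2)) auto
  have pw: "\<bar>e s * snd h s\<bar> \<le> n / 2 * (e s * e s) + 1 / (2 * n) * (snd h s * snd h s)" for s
  proof -
    have "2 * n * \<bar>e s * snd h s\<bar> \<le> (n * e s) * (n * e s) + snd h s * snd h s"
    proof -
      have "0 \<le> (\<bar>n * e s\<bar> - \<bar>snd h s\<bar>)\<^sup>2" by simp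
      then show ?thesis using n0 by (simp add: power2_eq_square algebra_simps abs_mult_self_eq abs_mult)
    qed
    then show ?thesis using n0 by (simp add: field_simps)
  qed
  have I1: "I \<le> n / 2 * E + 1 / (2 * n) * H"
    unfolding I_def vb[symmetric] by (rule set_integral_mono[OF ieh ib]) (use pw in \<open>auto simp: abs_le_iff\<close>)
  have I2: "- I \<le> n / 2 * E + 1 / (2 * n) * H"
  proof -
    have "(LINT s:{-\<tau>..0}|lborel. - (e s * snd h s)) \<le> n / 2 * E + 1 / (2 * n) * H"
      unfolding vb[symmetric]
    proof (rule set_integral_mono)
      show "set_integrable lborel {-\<tau>..0} (\<lambda>s. - (e s * snd h s))"
        using set_integrable_mult_right[of "-1::real" lborel "{-\<tau>..0}" "\<lambda>s. e s * snd h s"] ieh by simp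
    qed (use ib pw in \<open>auto simp: abs_le_iff\<close>)
    then show ?thesis unfolding I_def using set_integral_uminus[OF ieh] by simp
  qed
  have "1 / (2 * n) * H \<le> n / 2"
    using Hn n0 by (simp add: field_simps power2_eq_square)
  then have Ib: "\<bar>I\<bar> \<le> n * (E + 1) / 2" using I1 I2 by (simp add: field_simps)
  have "Gf A \<delta> \<epsilon> \<eta> \<tau> h = kappa0 A \<delta> \<epsilon> \<eta> \<tau> * fst h - I"
    unfolding Gf_def I_def e_def by simp
  then have "\<bar>Gf A \<delta> \<epsilon> \<eta> \<tau> h\<bar> \<le> \<bar>kappa0 A \<delta> \<epsilon> \<eta> \<tau>\<bar> * \<bar>fst h\<bar> + \<bar>I\<bar>"
    by (simp add: abs_mult[symmetric] abs_triangle_ineq4)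
  also have "\<dots> \<le> \<bar>kappa0 A \<delta> \<epsilon> \<eta> \<tau>\<bar> * n + n * (E + 1) / 2"
    using h0 Ib by (intro add_mono mult_left_mono) auto
  finally show ?thesis unfolding n_def E_def e_def by (simp add: algebra_simps)
qed

lemma ip_kappa:
  "ip \<tau> (q * kappa0 A \<delta> \<epsilon> \<eta> \<tau>, \<lambda>s. - q * exp ((A - \<delta>) * s)) h = q * Gf A \<delta> \<epsilon> \<eta> \<tau> h"
proof -
  have "(LINT s:{-\<tau>..0}|lborel. - q * exp ((A - \<delta>) * s) * snd h s)
      = (- q) * (LINT s:{-\<tau>..0}|lborel. exp ((A - \<delta>) * s) * snd h s)"
    by (simp only: mult.assoc set_integral_mult_right)
  then show ?thesis unfolding ip_def Gf_def by (simp only: fst_conv snd_conv) (simp add: algebra_simps)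
qed

lemma part1:
  assumes x: "L2 \<tau> (snd x)" and G0: "Gf A \<delta> \<epsilon> \<eta> \<tau> x > 0"
  shows "frechet_grad \<tau> (vf A \<delta> \<rho> \<epsilon> \<eta> \<tau> \<gamma>) x
     (nu A \<delta> \<rho> \<gamma> * (1 - \<gamma>) * Gf A \<delta> \<epsilon> \<eta> \<tau> x powr (- \<gamma>) * kappa0 A \<delta> \<epsilon> \<eta> \<tau>,
      \<lambda>s. - (nu A \<delta> \<rho> \<gamma> * (1 - \<gamma>) * Gf A \<delta> \<epsilon> \<eta> \<tau> x powr (- \<gamma>)) * exp ((A - \<delta>) * s))"
  (is "frechet_grad \<tau> ?v x ?p")
proof -
  define g0 where "g0 = Gf A \<delta> \<epsilon> \<eta> \<tau> x"
  define \<nu> where "\<nu> = nu A \<delta> \<rho> \<gamma>"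
  define d1 where "d1 = (1 - \<gamma>) * g0 powr (1 - \<gamma> - 1)"
  define C where "C = \<bar>kappa0 A \<delta> \<epsilon> \<eta> \<tau>\<bar>
           + ((LINT s:{-\<tau>..0}|lborel. exp ((A - \<delta>) * s) * exp ((A - \<delta>) * s)) + 1) / 2"
  have E0: "0 \<le> (LINT s:{-\<tau>..0}|lborel. exp ((A - \<delta>) * s) * exp ((A - \<delta>) * s))"
    by (rule sq_nonneg_int)
  have C0: "0 < C"
  proof -
    define E where "E = (LINT s:{-\<tau>..0}|lborel. exp ((A - \<delta>) * s) * exp ((A - \<delta>) * s))"
    have "0 \<le> E" unfolding E_def by (rule sq_nonneg_int)
    then have "0 < (E + 1) / 2" by simp
    then show ?thesis unfolding C_def E_def[symmetric] by (intro add_nonneg_pos) simp_all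
  qed
  have M2p: "M2 \<tau> ?p" unfolding M2_def by simp (rule L2_cont, intro continuous_intros)
  have D: "((\<lambda>y. y powr (1 - \<gamma>)) has_real_derivative d1) (at g0)"
    unfolding d1_def using G0 g0_def by (intro has_real_derivative_powr) auto
  have L: "\<forall>r>0. \<exists>s>0. \<forall>y. y \<noteq> g0 \<and> norm (y - g0) < s \<longrightarrow>
      norm ((y powr (1 - \<gamma>) - g0 powr (1 - \<gamma>)) / (y - g0) - d1) < r"
    using D unfolding has_field_derivative_iff LIM_eq by simp
  show ?thesis unfolding frechet_grad_def
  proof (intro conjI M2p allI impI)
    fix e :: real assume e: "e > 0"
    define e1 where "e1 = e / ((\<bar>\<nu>\<bar> + 1) * (C + 1))"
    have e1: "e1 > 0" unfolding e1_def using e C0 by (auto intro!: divide_pos_pos add_pos_nonneg)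
    obtain s where s: "s > 0" and hs: "\<And>y. y \<noteq> g0 \<Longrightarrow> \<bar>y - g0\<bar> < s \<Longrightarrow>
        \<bar>(y powr (1 - \<gamma>) - g0 powr (1 - \<gamma>)) / (y - g0) - d1\<bar> < e1"
      using L e1 by auto
    have key: "\<bar>(g0 + z) powr (1 - \<gamma>) - g0 powr (1 - \<gamma>) - d1 * z\<bar> \<le> e1 * \<bar>z\<bar>" if "\<bar>z\<bar> < s" for z
    proof (cases "z = 0")
      case True then show ?thesis by simp
    next
      case False
      have "\<bar>((g0 + z) powr (1 - \<gamma>) - g0 powr (1 - \<gamma>)) / z - d1\<bar> < e1"
        using hs[of "g0 + z"] that False by simp
      then have "\<bar>((g0 + z) powr (1 - \<gamma>) - g0 powr (1 - \<gamma>)) / z - d1\<bar> * \<bar>z\<bar> \<le> e1 * \<bar>z\<bar>"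
        by (intro mult_right_mono) auto
      also have "\<bar>((g0 + z) powr (1 - \<gamma>) - g0 powr (1 - \<gamma>)) / z - d1\<bar> * \<bar>z\<bar>
          = \<bar>(g0 + z) powr (1 - \<gamma>) - g0 powr (1 - \<gamma>) - d1 * z\<bar>"
        using False by (simp add: abs_mult[symmetric] field_simps)
      finally show ?thesis .
    qed
    show "\<exists>d>0. \<forall>h. M2 \<tau> h \<and> 0 < nrm \<tau> h \<and> nrm \<tau> h < d \<longrightarrow>
             \<bar>?v (madd x h) - ?v x - ip \<tau> ?p h\<bar> \<le> e * nrm \<tau> h"
    proof (intro exI[of _ "s / (C + 1)"] conjI allI impI)
      show "0 < s / (C + 1)" using s C0 by simp
      fix h assume h: "M2 \<tau> h \<and> 0 < nrm \<tau> h \<and> nrm \<tau> h < s / (C + 1)"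
      define z where "z = Gf A \<delta> \<epsilon> \<eta> \<tau> h"
      define n where "n = nrm \<tau> h"
      have zb: "\<bar>z\<bar> \<le> C * n" unfolding z_def C_def n_def
        using Gf_bound[of \<tau> h] h unfolding M2_def by simp
      have "(C + 1) * n < s" using h C0 unfolding n_def by (simp add: pos_less_divide_eq mult.commute)
      moreover have "C * n \<le> (C + 1) * n" using h unfolding n_def by (intro mult_right_mono) auto
      ultimately have "C * n < s" by linarith
      then have zs: "\<bar>z\<bar> < s" using zb by simp
      have vx: "?v (madd x h) = \<nu> * (g0 + z) powr (1 - \<gamma>)"
        unfolding vf_def \<nu>_def g0_def z_def using Gf_add[of \<tau> x h] x h unfolding M2_def by simp
      have ipp: "ip \<tau> ?p h = \<nu> * (d1 * z)"
      proof -
        have "ip \<tau> ?p h = (nu A \<delta> \<rho> \<gamma> * (1 - \<gamma>) * Gf A \<delta> \<epsilon> \<eta> \<tau> x powr (- \<gamma>)) * Gf A \<delta> \<epsilon> \<eta> \<tau> h"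
          by (rule ip_kappa)
        then show ?thesis unfolding d1_def \<nu>_def z_def g0_def by simp
      qed
      have "\<bar>?v (madd x h) - ?v x - ip \<tau> ?p h\<bar>
          = \<bar>\<nu>\<bar> * \<bar>(g0 + z) powr (1 - \<gamma>) - g0 powr (1 - \<gamma>) - d1 * z\<bar>"
        unfolding vx ipp by (simp add: vf_def \<nu>_def g0_def abs_mult[symmetric] algebra_simps)
      also have "\<dots> \<le> \<bar>\<nu>\<bar> * (e1 * (C * n))"
        using key[OF zs] zb e1 by (intro mult_left_mono) (auto intro: order_trans)
      also have "\<dots> \<le> e * n"
      proof -
        have n0: "0 \<le> n" using h n_def by simp
        have "\<bar>\<nu>\<bar> * C \<le> (\<bar>\<nu>\<bar> + 1) * (C + 1)" using C0 by (simp add: algebra_simps)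
        then have "e1 * (\<bar>\<nu>\<bar> * C) \<le> e1 * ((\<bar>\<nu>\<bar> + 1) * (C + 1))" using e1 by (intro mult_left_mono) auto
        also have "e1 * ((\<bar>\<nu>\<bar> + 1) * (C + 1)) = e"
        proof -
          have "(\<bar>\<nu>\<bar> + 1) * (C + 1) \<noteq> 0" using C0 by (smt (verit) abs_ge_zero mult_pos_pos)
          then show ?thesis unfolding e1_def by simp
        qed
        finally have "\<bar>\<nu>\<bar> * C * e1 \<le> e" by (simp add: mult_ac)
        then show ?thesis using n0 e1
          by (metis mult.assoc mult.commute mult_right_mono)
      qed
      finally show "\<bar>?v (madd x h) - ?v x - ip \<tau> ?p h\<bar> \<le> e * nrm \<tau> h" unfolding n_def .
    qed
  qed
qed

lemma tangent_w:
  fixes b w :: real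
  assumes b: "b \<noteq> 0" "b < 1" and w: "w > 0"
  shows "w powr b / b \<le> 1 / b + (w - 1)"
proof (cases "b > 0")
  case True
  have "w powr b * 1 powr (1 - b) \<le> b * w + (1 - b) * 1"
    by (rule Youngs_inequality_0) (use True b w in auto)
  then have "w powr b \<le> b * w + (1 - b)" by simp
  then have "w powr b / b \<le> (b * w + (1 - b)) / b" using True by (simp add: divide_right_mono)
  also have "\<dots> = 1 / b + (w - 1)" using True by (simp add: field_simps)
  finally show ?thesis .
next
  case False
  then have bn: "b < 0" using b by simp
  have "1 + b * ln w \<le> exp (b * ln w)" by (rule exp_ge_add_one_self)
  moreover have "b * (w - 1) \<le> b * ln w" using bn ln_le_minus_one[OF w]
    by (simp add: mult_le_cancel_left_neg)
  ultimately have "1 + b * (w - 1) \<le> exp (b * ln w)" by linarith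
  then have "1 + b * (w - 1) \<le> w powr b" using w by (simp add: powr_def)
  then have "w powr b / b \<le> (1 + b * (w - 1)) / b" using bn by (simp add: divide_right_mono_neg)
  also have "\<dots> = 1 / b + (w - 1)" using bn by (simp add: field_simps)
  finally show ?thesis .
qed

lemma tangent:
  fixes b t u :: real
  assumes b: "b \<noteq> 0" "b < 1" and t: "t > 0" and u: "u > 0"
  shows "t powr b / b \<le> u powr b / b + u powr (b - 1) * (t - u)"
proof -
  have "(t / u) powr b / b \<le> 1 / b + (t / u - 1)" by (rule tangent_w) (use assms in auto)
  have tw: "u powr b * (t / u) powr b = t powr b"
    using t u by (simp add: powr_divide)
  have "t powr b / b = u powr b * ((t / u) powr b / b)" using tw by simp
  also have "\<dots> \<le> u powr b * (1 / b + (t / u - 1))"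
    using u \<open>(t / u) powr b / b \<le> 1 / b + (t / u - 1)\<close> by (intro mult_left_mono) auto
  also have "u powr b * (1 / b + (t / u - 1)) = u powr b / b + u powr (b - 1) * (t - u)"
    using u by (simp add: powr_diff field_simps)
  finally show ?thesis .
qed

lemma ham_calc:
  fixes A \<delta> \<rho> \<gamma> G0 X0 q Ax Bs :: real
  assumes g: "\<gamma> > 0" "\<gamma> \<noteq> 1" and rho: "\<rho> > (A - \<delta>) * (1 - \<gamma>)" and G0: "G0 > 0"
    and q: "q = nu A \<delta> \<rho> \<gamma> * (1 - \<gamma>) * G0 powr (- \<gamma>)"
    and Bs: "Bs = - q" and Ax: "Ax = q * ((A - \<delta>) * G0 + X0)"
  shows "(SUP c\<in>{X0<..}. (c - X0) powr (1 - \<gamma>) / (1 - \<gamma>) + Ax + c * Bs)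
       = \<rho> * (nu A \<delta> \<rho> \<gamma> * G0 powr (1 - \<gamma>))"
proof -
  define a where "a = A - \<delta>"
  define K where "K = (\<rho> - a * (1 - \<gamma>)) / \<gamma>"
  define \<beta> where "\<beta> = 1 - \<gamma>"
  have K: "K > 0" unfolding K_def a_def using rho g by simp
  have b: "\<beta> \<noteq> 0" "\<beta> < 1" unfolding \<beta>_def using g by auto
  define P where "P = K powr (- \<gamma>)"
  define Gm where "Gm = G0 powr (- \<gamma>)"
  have nu: "nu A \<delta> \<rho> \<gamma> = P / \<beta>" unfolding nu_def P_def K_def a_def \<beta>_def by simp
  have q2: "q = P * Gm" unfolding q nu Gm_def using b by (simp add: \<beta>_def)
  define ts where "ts = K * G0"
  have ts: "ts > 0" unfolding ts_def using K G0 by simp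
  have tsb: "ts powr (\<beta> - 1) = q" unfolding ts_def q2 P_def Gm_def \<beta>_def
    using K G0 by (simp add: powr_mult)
  define F where "F c = (c - X0) powr (1 - \<gamma>) / (1 - \<gamma>) + Ax + c * Bs" for c
  have Fle: "F c \<le> F (X0 + ts)" if "c \<in> {X0<..}" for c
  proof -
    have "(c - X0) powr \<beta> / \<beta> \<le> ts powr \<beta> / \<beta> + ts powr (\<beta> - 1) * ((c - X0) - ts)"
      by (rule tangent) (use b ts that in auto)
    then show ?thesis unfolding F_def \<beta>_def[symmetric] tsb Bs by (simp add: algebra_simps)
  qed
  have "(SUP c\<in>{X0<..}. F c) = F (X0 + ts)"
    by (rule cSup_eq_maximum) (use ts Fle in auto)
  also have "F (X0 + ts) = \<rho> * (nu A \<delta> \<rho> \<gamma> * G0 powr (1 - \<gamma>))"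
  proof -
    have pw1: "y powr (1 - \<gamma>) = y * y powr (- \<gamma>)" if "y > 0" for y :: real
    proof -
      have "y powr (1 - \<gamma>) = y powr (1 + (- \<gamma>))" by simp
      also have "\<dots> = y powr 1 * y powr (- \<gamma>)" by (rule powr_add)
      finally show ?thesis using that by simp
    qed
    have Kb: "K powr \<beta> = K * P" unfolding P_def \<beta>_def using K pw1 by simp
    have Gb: "G0 powr \<beta> = G0 * Gm" unfolding Gm_def \<beta>_def using G0 pw1 by simp
    have "(K * G0) powr \<beta> = K powr \<beta> * G0 powr \<beta>" using K G0 by (simp add: powr_mult)
    then have tsp: "ts powr \<beta> = K * P * G0 * Gm" unfolding ts_def Kb Gb by simp
    have Kg: "K * \<gamma> = \<rho> - a * \<beta>" unfolding K_def \<beta>_def using g by simp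
    have "F (X0 + ts) = ts powr \<beta> / \<beta> + q * (a * G0 + X0) - (X0 + ts) * q"
      unfolding F_def \<beta>_def Ax Bs a_def by simp
    also have "\<dots> = P * G0 * Gm * (K / \<beta> + a - K)"
      unfolding tsp q2 using b by (simp add: ts_def field_simps)
    also have "K / \<beta> + a - K = \<rho> / \<beta>"
    proof -
      have "K = K * \<beta> + K * \<gamma>" unfolding \<beta>_def by (simp add: algebra_simps)
      then have "K = K * \<beta> + \<rho> - a * \<beta>" using Kg by simp
      then show ?thesis using b by (simp add: field_simps)
    qed
    finally show ?thesis unfolding nu \<beta>_def[symmetric] Gb by (simp add: field_simps)
  qed
  finally show ?thesis unfolding F_def .
qed

lemma dir_deriv:
  assumes fg: "frechet_grad \<tau> f x p" and h: "M2 \<tau> h" and hn: "0 < nrm \<tau> h"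
    and D: "((\<lambda>t. f (madd x (t * fst h, \<lambda>s. t * snd h s))) has_real_derivative D) (at 0)"
  shows "ip \<tau> p h = D"
proof -
  define F where "F t = f (madd x (t * fst h, \<lambda>s. t * snd h s))" for t
  define N where "N = nrm \<tau> h"
  have F0: "F 0 = f x" unfolding F_def madd_def by simp
  have N0: "N > 0" using hn N_def by simp
  have ipk: "ip \<tau> p (t * fst h, \<lambda>s. t * snd h s) = t * ip \<tau> p h" for t
    unfolding ip_def by (simp add: algebra_simps)
  have LD: "\<forall>r>0. \<exists>s>0. \<forall>t. t \<noteq> 0 \<and> norm (t - 0) < s \<longrightarrow> norm ((F t - F 0) / (t - 0) - D) < r"
    using D unfolding F_def[symmetric] has_field_derivative_iff LIM_eq by simp
  have "\<bar>ip \<tau> p h - D\<bar> \<le> r" if r: "r > 0" for r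
  proof -
    define e1 where "e1 = r / (N + 1)"
    have e1: "e1 > 0" unfolding e1_def using r N0 by simp
    obtain d where d: "d > 0" and hd: "\<And>k. M2 \<tau> k \<Longrightarrow> 0 < nrm \<tau> k \<Longrightarrow> nrm \<tau> k < d \<Longrightarrow>
        \<bar>f (madd x k) - f x - ip \<tau> p k\<bar> \<le> e1 * nrm \<tau> k"
      using fg e1 unfolding frechet_grad_def by blast
    obtain s where s: "s > 0" and hs: "\<And>t. t \<noteq> 0 \<Longrightarrow> \<bar>t\<bar> < s \<Longrightarrow> \<bar>(F t - F 0) / t - D\<bar> < e1"
      using LD e1 by auto
    define t where "t = min s (d / N) / 2"
    have t0: "t > 0" unfolding t_def using s d N0 by simp
    have ts: "t < s" unfolding t_def using s d N0 by simp
    have tN: "t * N < d" using N0 d unfolding t_def by (simp add: min_def field_simps)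
    define k where "k = (t * fst h, \<lambda>s. t * snd h s)"
    have Mk: "M2 \<tau> k" using h unfolding k_def M2_def by (simp add: L2_scale)
    have nk: "nrm \<tau> k = t * N" unfolding k_def N_def nrm_scale using t0 by simp
    have 1: "\<bar>F t - F 0 - t * ip \<tau> p h\<bar> \<le> e1 * (t * N)"
      using hd[OF Mk] nk t0 N0 tN unfolding F0 unfolding F_def k_def ipk by simp
    have "\<bar>(F t - F 0) / t - D\<bar> < e1" using hs t0 ts by simp
    then have "\<bar>(F t - F 0) / t - D\<bar> * t \<le> e1 * t" using t0 by simp
    then have 2: "\<bar>F t - F 0 - t * D\<bar> \<le> e1 * t" using t0
      by (simp add: abs_mult[symmetric] field_simps)
    have "t * \<bar>ip \<tau> p h - D\<bar> = \<bar>t * (ip \<tau> p h - D)\<bar>"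
      using t0 by (simp add: abs_mult)
    also have "\<dots> = \<bar>(F t - F 0 - t * D) - (F t - F 0 - t * ip \<tau> p h)\<bar>"
      by (simp add: algebra_simps)
    also have "\<dots> \<le> e1 * t + e1 * (t * N)" using 1 2 by linarith
    also have "\<dots> = e1 * (N + 1) * t" by (simp add: algebra_simps)
    also have "e1 * (N + 1) = r" unfolding e1_def using N0 by simp
    also have "r * t = t * r" by simp
    finally show ?thesis using t0 by simp
  qed
  then show ?thesis
    by (metis abs_le_zero_iff dense_le eq_iff_diff_eq_0 linorder_not_le)
qed

lemma x1_L2:
  assumes g: "L2 \<tau> g" and x1: "\<forall>s\<in>{-\<tau>..0}. x1 s = (LINT u:{-\<tau>..s}|lborel. g u)"
  shows "L2 \<tau> x1"
proof (rule L2_cont)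
  have gi: "set_integrable lborel {-\<tau>..0} g" by (rule L2_int[OF g])
  have c: "continuous_on {-\<tau>..0} (\<lambda>s. integral {-\<tau>..s} g)"
    by (rule indefinite_integral_continuous_1) (rule set_borel_integral_eq_integral(1)[OF gi])
  have "x1 s = integral {-\<tau>..s} g" if "s \<in> {-\<tau>..0}" for s
  proof -
    have "set_integrable lborel {-\<tau>..s} g"
      by (rule set_integrable_subset[OF gi]) (use that in auto)
    then show ?thesis using x1 that set_borel_integral_eq_integral(2) by metis
  qed
  then show "continuous_on {-\<tau>..0} x1" using continuous_on_cong[of "{-\<tau>..0}" "{-\<tau>..0}" x1] c by metis
qed

lemma part2_ip:
  assumes fg: "frechet_grad \<tau> (vf A \<delta> \<rho> \<epsilon> \<eta> \<tau> \<gamma>) x p" and x: "L2 \<tau> (snd x)"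
    and G0: "Gf A \<delta> \<epsilon> \<eta> \<tau> x > 0" and h1: "L2 \<tau> h1"
  shows "ip \<tau> p (1, h1) = nu A \<delta> \<rho> \<gamma> * (1 - \<gamma>) * Gf A \<delta> \<epsilon> \<eta> \<tau> x powr (- \<gamma>) * Gf A \<delta> \<epsilon> \<eta> \<tau> (1, h1)"
proof -
  define h where "h = (1::real, h1)"
  define g0 where "g0 = Gf A \<delta> \<epsilon> \<eta> \<tau> x"
  define z where "z = Gf A \<delta> \<epsilon> \<eta> \<tau> h"
  define \<nu> where "\<nu> = nu A \<delta> \<rho> \<gamma>"
  have Mh: "M2 \<tau> h" unfolding h_def M2_def using h1 by simp
  have "1 \<le> ip \<tau> h h" unfolding ip_def h_def using sq_nonneg_int[of \<tau> h1] by simp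
  then have hn: "0 < nrm \<tau> h" unfolding nrm_def by simp
  have F: "(\<lambda>t. vf A \<delta> \<rho> \<epsilon> \<eta> \<tau> \<gamma> (madd x (t * fst h, \<lambda>s. t * snd h s)))
      = (\<lambda>t. \<nu> * (g0 + t * z) powr (1 - \<gamma>))"
  proof
    fix t
    have "L2 \<tau> (snd (t * fst h, \<lambda>s. t * snd h s))" using h1 unfolding h_def by (simp add: L2_scale)
    then show "vf A \<delta> \<rho> \<epsilon> \<eta> \<tau> \<gamma> (madd x (t * fst h, \<lambda>s. t * snd h s)) = \<nu> * (g0 + t * z) powr (1 - \<gamma>)"
      unfolding vf_def \<nu>_def g0_def z_def using Gf_add[OF x] Gf_scale by simp
  qed
  have D: "((\<lambda>t. \<nu> * (g0 + t * z) powr (1 - \<gamma>)) has_real_derivative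
      \<nu> * ((1 - \<gamma>) * (g0 + 0 * z) powr (1 - \<gamma> - of_nat 1) * z)) (at 0)"
  proof (intro DERIV_cmult DERIV_fun_powr)
    show "((\<lambda>t. g0 + t * z) has_real_derivative z) (at 0)"
      by (auto intro!: derivative_eq_intros)
    show "0 < g0 + 0 * z" using G0 g0_def by simp
  qed
  have "ip \<tau> p h = \<nu> * ((1 - \<gamma>) * (g0 + 0 * z) powr (1 - \<gamma> - of_nat 1) * z)"
    by (rule dir_deriv[OF fg Mh hn]) (use D F in simp)
  then show ?thesis unfolding h_def \<nu>_def g0_def z_def by simp
qed

theorem mainTheorem7:
  fixes A \<delta> \<rho> \<epsilon> \<eta> \<tau> \<gamma> :: real
  assumes "A > 0" "\<delta> > 0" "\<rho> > 0" "\<epsilon> > 0" "\<eta> > 0" "\<tau> > 0" "\<gamma> > 0" "\<gamma> \<noteq> 1"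
    and "\<rho> > (A - \<delta>) * (1 - \<gamma>)"
  shows "(\<forall>x. M2 \<tau> x \<and> Gf A \<delta> \<epsilon> \<eta> \<tau> x > 0 \<longrightarrow>
            (\<exists>p. frechet_grad \<tau> (vf A \<delta> \<rho> \<epsilon> \<eta> \<tau> \<gamma>) x p))
       \<and> (\<forall>x0 x1 g. L2 \<tau> g \<and> (\<forall>s\<in>{-\<tau>..0}. x1 s = (LINT u:{-\<tau>..s}|lborel. g u))
            \<and> Gf A \<delta> \<epsilon> \<eta> \<tau> (x0, x1) > 0 \<longrightarrow>
            (\<forall>p. frechet_grad \<tau> (vf A \<delta> \<rho> \<epsilon> \<eta> \<tau> \<gamma>) (x0, x1) p \<longrightarrow>
               \<rho> * vf A \<delta> \<rho> \<epsilon> \<eta> \<tau> \<gamma> (x0, x1) - Ham A \<delta> \<epsilon> \<eta> \<tau> \<gamma> (x0, x1) g p = 0))"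
proof (intro conjI allI impI)
  fix x assume "M2 \<tau> x \<and> Gf A \<delta> \<epsilon> \<eta> \<tau> x > 0"
  then show "\<exists>p. frechet_grad \<tau> (vf A \<delta> \<rho> \<epsilon> \<eta> \<tau> \<gamma>) x p"
    using part1[of \<tau> x] unfolding M2_def by blast
next
  fix x0 x1 g p
  assume H: "L2 \<tau> g \<and> (\<forall>s\<in>{-\<tau>..0}. x1 s = (LINT u:{-\<tau>..s}|lborel. g u)) \<and> Gf A \<delta> \<epsilon> \<eta> \<tau> (x0, x1) > 0"
    and fg: "frechet_grad \<tau> (vf A \<delta> \<rho> \<epsilon> \<eta> \<tau> \<gamma>) (x0, x1) p"
  have gL: "L2 \<tau> g" and x1d: "\<forall>s\<in>{-\<tau>..0}. x1 s = (LINT u:{-\<tau>..s}|lborel. g u)"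
    and G0: "Gf A \<delta> \<epsilon> \<eta> \<tau> (x0, x1) > 0" using H by auto
  have xL: "L2 \<tau> (snd (x0, x1))" using x1_L2[OF gL x1d] by simp
  define G where "G = Gf A \<delta> \<epsilon> \<eta> \<tau> (x0, x1)"
  define q where "q = nu A \<delta> \<rho> \<gamma> * (1 - \<gamma>) * G powr (- \<gamma>)"
  define k0 where "k0 = kappa0 A \<delta> \<epsilon> \<eta> \<tau>"
  define a where "a = A - \<delta>"
  define Ieg where "Ieg = (LINT s:{-\<tau>..0}|lborel. exp (a * s) * g s)"
  define X0 where "X0 = (LINT u:{-\<tau>..0}|lborel. g u)"
  have ipq: "ip \<tau> p (1, h1) = q * Gf A \<delta> \<epsilon> \<eta> \<tau> (1, h1)" if "L2 \<tau> h1" for h1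
    unfolding q_def G_def by (rule part2_ip[OF fg xL G0 that])
  have p0: "fst p = q * k0"
    using ipq[of "\<lambda>s. 0"] L2_cont[of \<tau> "\<lambda>s. 0"] unfolding ip_def Gf_def k0_def by simp
  have pg: "(LINT s:{-\<tau>..0}|lborel. snd p s * g s) = - q * Ieg"
    using ipq[OF gL] p0 unfolding ip_def Gf_def k0_def Ieg_def a_def by (simp add: algebra_simps)
  have eL: "L2 \<tau> (\<lambda>s. exp (\<eta> * s))" by (rule L2_cont) (intro continuous_intros)
  have pe: "(LINT s:{-\<tau>..0}|lborel. snd p s * exp (\<eta> * s))
      = - q * (LINT s:{-\<tau>..0}|lborel. exp ((A - \<delta>) * s) * exp (\<eta> * s))"
    using ipq[OF eL] p0 unfolding ip_def Gf_def k0_def by (simp add: algebra_simps)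
  have ee: "(LINT s:{-\<tau>..0}|lborel. exp ((A - \<delta>) * s) * exp (\<eta> * s))
      = (LINT s:{-\<tau>..0}|lborel. exp ((A - \<delta> + \<eta>) * s))"
    by (simp add: exp_add[symmetric] algebra_simps)
  have Bs: "Bstar \<epsilon> \<eta> \<tau> p = - q"
  proof -
    have "(LINT s:{-\<tau>..0}|lborel. exp (\<eta> * s) * snd p s) = (LINT s:{-\<tau>..0}|lborel. snd p s * exp (\<eta> * s))"
      by (simp add: mult.commute)
    then show ?thesis unfolding Bstar_def p0 using pe ee unfolding k0_def kappa0_def
      by (simp add: algebra_simps)
  qed
  have Fub: "a * (LINT s:{-\<tau>..0}|lborel. exp (a * s) * x1 s) = X0 - Ieg"
  proof -
    have "(LINT s:{-\<tau>..0}|lborel. exp (a * s) * x1 s)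
        = (LINT s:{-\<tau>..0}|lborel. exp (a * s) * (LINT u:{-\<tau>..s}|lborel. g u))"
      by (rule set_lebesgue_integral_cong) (use x1d in auto)
    moreover have "a * (LINT s:{-\<tau>..0}|lborel. exp (a * s) * (LINT u:{-\<tau>..s}|lborel. g u)) = X0 - Ieg"
    proof (cases "a = 0")
      case True then show ?thesis unfolding X0_def Ieg_def by simp
    next
      case False
      show ?thesis unfolding X0_def Ieg_def
        by (rule fubini_id) (use False \<open>\<tau> > 0\<close> L2_int[OF gL] in auto)
    qed
    ultimately show ?thesis by simp
  qed
  have Gx: "G = k0 * x0 - (LINT s:{-\<tau>..0}|lborel. exp (a * s) * x1 s)"
    unfolding G_def Gf_def k0_def a_def by simp
  have Ax: "Axp A \<delta> \<tau> (x0, x1) g p = q * ((A - \<delta>) * G + X0)"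
  proof -
    have "(LINT s:{-\<tau>..0}|lborel. (- g s) * snd p s) = (LINT s:{-\<tau>..0}|lborel. (-1) * (snd p s * g s))"
      by (simp add: mult.commute)
    also have "\<dots> = (-1) * (LINT s:{-\<tau>..0}|lborel. snd p s * g s)"
      by (rule set_integral_mult_right)
    also have "\<dots> = q * Ieg" using pg by simp
    finally have "Axp A \<delta> \<tau> (x0, x1) g p = a * x0 * (q * k0) + q * Ieg"
      unfolding Axp_def p0 a_def by simp
    also have "\<dots> = q * (a * G + X0)"
    proof -
      define J where "J = (LINT s:{-\<tau>..0}|lborel. exp (a * s) * x1 s)"
      have "q * (a * (k0 * x0 - J) + X0) = a * x0 * (q * k0) + q * (X0 - a * J)"
        by (simp add: algebra_simps)
      then show ?thesis unfolding Gx J_def[symmetric] using Fub[folded J_def] by simp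
    qed
    finally show ?thesis unfolding a_def .
  qed
  have x10: "snd (x0, x1) 0 = X0" using x1d \<open>\<tau> > 0\<close> unfolding X0_def by simp
  have "Ham A \<delta> \<epsilon> \<eta> \<tau> \<gamma> (x0, x1) g p
      = (SUP c\<in>{X0<..}. (c - X0) powr (1 - \<gamma>) / (1 - \<gamma>) + Axp A \<delta> \<tau> (x0, x1) g p + c * Bstar \<epsilon> \<eta> \<tau> p)"
    unfolding Ham_def HCV_def x10 ..
  also have "\<dots> = \<rho> * (nu A \<delta> \<rho> \<gamma> * G powr (1 - \<gamma>))"
    by (rule ham_calc[OF assms(7,8,9)]) (use G0 G_def q_def Bs Ax in auto)
  also have "\<dots> = \<rho> * vf A \<delta> \<rho> \<epsilon> \<eta> \<tau> \<gamma> (x0, x1)" unfolding vf_def G_def ..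
  finally show "\<rho> * vf A \<delta> \<rho> \<epsilon> \<eta> \<tau> \<gamma> (x0, x1) - Ham A \<delta> \<epsilon> \<eta> \<tau> \<gamma> (x0, x1) g p = 0" by simp
qed

end
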